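(* Consider the program \[\Pi(\theta)=\max_{P}\int_0^\infty P(y)\,dy\quad\text{s.t.}\quad \lambda\int_0^\infty w_-(P(y))\,dy\le\theta,\] over functions $P:[0,\infty)\to[0,1]$ that are decreasing and right continuous. Its maximum value is $\mu^*\theta/\lambda$, and the unique optimal $P^*$ is \[P^*(y)=\begin{cases}p^* & \text{if } y<\frac{\mu^*\theta}{p^*\lambda},\\ 0 & \text{if } y\ge \frac{\mu^*\theta}{p^*\lambda}.\end{cases}\]
   Context: $\theta>0$, $\lambda>0$ are constants. $w_-:[0,1]\to[0,1]$ is strictly increasing, thrice differentiable, with $w_-(0)=0$, $w_-(1)=1$, $w_-'(0)>1$, $w_-'(1)>1$, $w_-'''>0$. $\mu^*=\max_{p\in(0,1]}p/w_-(p)$, and $p^*\in(0,1)$ is the unique point with $\mu^*w_-(p^* )=p^*$. ($P(y)$ is interpreted as the tail $P(T>y)$ of a nonnegative random price $T$.) *)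

theory Defs
  imports "HOL-Analysis.Analysis"
begin

definition admissible :: "(real \<Rightarrow> real) \<Rightarrow> bool" where
  "admissible P \<longleftrightarrow>
     (\<forall>y\<ge>0. 0 \<le> P y \<and> P y \<le> 1) \<and>
     (\<forall>x y. 0 \<le> x \<longrightarrow> x \<le> y \<longrightarrow> P y \<le> P x) \<and>
     (\<forall>y\<ge>0. continuous (at_right y) P)"

definition int0 :: "(real \<Rightarrow> real) \<Rightarrow> ennreal" where
  "int0 f = (\<integral>\<^sup>+ y\<in>{0..}. ennreal (f y) \<partial>lborel)"

definition mu_star :: "(real \<Rightarrow> real) \<Rightarrow> real" where
  "mu_star w = (SUP p\<in>{0<..1}. p / w p)"

end

theory Submission imports Defs begin

lemma w_pos:
  fixes w :: "real \<Rightarrow> real"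
  assumes w_mono: "strict_mono_on {0..1} w" and w0: "w 0 = (0::real)" and p: "0 < p" "p \<le> 1"
  shows "w p > 0"
proof -
  have "w 0 < w p" by (rule strict_mono_onD[OF w_mono]) (use p in auto)
  then show ?thesis using w0 by simp
qed

lemma mu_facts:
  fixes w w1 :: "real \<Rightarrow> real"
  assumes w_mono: "strict_mono_on {0..1} w"
    and w0: "w 0 = 0" and w1_val: "w 1 = 1"
    and d1: "\<forall>x\<in>{0..1}. (w has_real_derivative w1 x) (at x within {0..1})"
    and w1_0: "w1 0 > 1" and w1_1: "w1 1 > 1"
  shows "\<forall>p\<in>{0<..1}. p \<le> mu_star w * w p" and "mu_star w > 1"
proof -
  have D0: "((\<lambda>y. (w y - w 0)/(y - 0)) \<longlongrightarrow> w1 0) (at 0 within {0..1})"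
    using bspec[OF d1, of 0] by (auto simp: has_field_derivative_iff)
  have "eventually (\<lambda>y. 1 < (w y - w 0)/(y - 0)) (at 0 within {0..1})"
    using order_tendstoD(1)[OF D0 w1_0] .
  then obtain d where d: "d > 0" "\<And>y. y \<in> {0..1} \<Longrightarrow> y \<noteq> 0 \<Longrightarrow> dist y 0 < d \<Longrightarrow> 1 < (w y - w 0)/(y - 0)"
    unfolding eventually_at by blast
  define e where "e = min (d/2) 1"
  have e: "0 < e" "e < d" "e \<le> 1" using d by (auto simp: e_def)
  have wepos: "w e > 0" using w_pos[OF w_mono w0, of e] e by auto
  have bnd: "p / w p \<le> max 1 (1 / w e)" if "p \<in> {0<..1}" for p
  proof (cases "p < e")
    case True
    then have "1 < w p / p" using d(2)[of p] that e w0 by auto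
    then have "p < w p" using that by (simp add: field_simps)
    then have "p / w p \<le> 1" using that by simp
    then show ?thesis by simp
  next
    case False
    have "w e \<le> w p" using strict_mono_onD[OF w_mono, of e p] False e that
      by (cases "e = p") auto
    then have "p / w p \<le> 1 / w e" using that wepos by (intro frac_le) auto
    then show ?thesis by simp
  qed
  have bdd: "bdd_above ((\<lambda>p. p / w p) ` {0<..1})"
    using bnd by (intro bdd_aboveI2) 
  show A: "\<forall>p\<in>{0<..1}. p \<le> mu_star w * w p"
  proof
    fix p :: real assume p: "p \<in> {0<..1}"
    have "p / w p \<le> mu_star w" unfolding mu_star_def
      using cSUP_upper[OF p bdd] .
    then show "p \<le> mu_star w * w p" using w_pos[OF w_mono w0, of p] p
      by (simp add: divide_simps)
  qed
  have D1: "((\<lambda>y. (w y - w 1)/(y - 1)) \<longlongrightarrow> w1 1) (at 1 within {0..1})"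
    using bspec[OF d1, of 1] by (auto simp: has_field_derivative_iff)
  have "eventually (\<lambda>y. 1 < (w y - w 1)/(y - 1)) (at 1 within {0..1})"
    using order_tendstoD(1)[OF D1 w1_1] .
  then obtain d' where d': "d' > 0" "\<And>y. y \<in> {0..1} \<Longrightarrow> y \<noteq> 1 \<Longrightarrow> dist y 1 < d' \<Longrightarrow> 1 < (w y - w 1)/(y - 1)"
    unfolding eventually_at by blast
  define q where "q = max (1 - d'/2) (1/2)"
  have q: "0 < q" "q < 1" "dist q 1 < d'" using d' by (auto simp: q_def dist_real_def)
  have "1 < (w q - 1)/(q - 1)" using d'(2)[of q] q w1_val by auto
  then have "w q < q" using q by (simp add: divide_simps)
  moreover have "w q > 0" using w_pos[OF w_mono w0, of q] q by auto
  moreover have "q \<le> mu_star w * w q" using A q by auto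
  ultimately show "mu_star w > 1"
  proof -
    assume a: "w q < q" "w q > 0" "q \<le> mu_star w * w q"
    show ?thesis
    proof (rule ccontr)
      assume "\<not> mu_star w > 1"
      then have "mu_star w * w q \<le> 1 * w q" using a by (intro mult_right_mono) auto
      then show False using a by linarith
    qed
  qed
qed


lemma int0_alt: "int0 f = (\<integral>\<^sup>+ y. ennreal (f y) * indicator {0..} y \<partial>lborel)"
  unfolding int0_def by simp

lemma meas_real:
  fixes f :: "real \<Rightarrow> real"
  assumes "\<forall>x y. 0 \<le> x \<longrightarrow> x \<le> y \<longrightarrow> f y \<le> f x"
  shows "(\<lambda>y. f y * indicator {0..} y) \<in> borel_measurable lborel"
proof -
  have "mono (\<lambda>y. - f (max 0 y))"
    using assms unfolding mono_def by (auto simp: max_def)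
  then have "(\<lambda>y. - f (max 0 y)) \<in> borel_measurable borel" by (rule borel_measurable_mono)
  then have m: "(\<lambda>y. - (- f (max 0 y)) * indicator {0..} y) \<in> borel_measurable borel"
    by measurable
  have "(\<lambda>y. f y * indicator {0..} y) = (\<lambda>y. - (- f (max 0 y)) * indicator {0..} y)"
    by (auto simp: indicator_def max_def)
  then show ?thesis using m by simp
qed

lemma meas_enn:
  fixes f :: "real \<Rightarrow> real"
  assumes "\<forall>x y. 0 \<le> x \<longrightarrow> x \<le> y \<longrightarrow> f y \<le> f x"
  shows "(\<lambda>y. ennreal (f y) * indicator {0..} y) \<in> borel_measurable lborel"
proof -
  have "(\<lambda>y. ennreal (f y * indicator {0..} y)) \<in> borel_measurable lborel"
    using meas_real[OF assms] by measurable
  moreover have "(\<lambda>y. ennreal (f y * indicator {0..} y)) = (\<lambda>y. ennreal (f y) * indicator {0..} y)"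
    by (auto simp: indicator_def)
  ultimately show ?thesis by simp
qed

lemma int0_step:
  fixes a c :: real
  assumes "a \<ge> 0" "c \<ge> 0"
  shows "(\<integral>\<^sup>+ y. ennreal a * indicator {0..<c} y \<partial>lborel) = ennreal (a * c)"
  using assms by (simp add: nn_integral_cmult_indicator ennreal_mult)

lemma AE_interval:
  assumes "AE x in lborel. Q x" "(a::real) < b"
  shows "\<exists>x\<in>{a<..<b}. Q x"
proof (rule ccontr)
  assume "\<not> ?thesis"
  then have sub: "{a<..<b} \<subseteq> {x \<in> space lborel. \<not> Q x}" by auto
  from assms(1) obtain N where N: "{x \<in> space lborel. \<not> Q x} \<subseteq> N" "emeasure lborel N = 0" "N \<in> sets lborel"
    by (rule AE_E)
  have "emeasure lborel {a<..<b} \<le> emeasure lborel N"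
    using sub N by (intro emeasure_mono) auto
  then show False using N assms(2) by simp
qed


lemma right_cont_near:
  fixes P :: "real \<Rightarrow> real"
  assumes "continuous (at_right y) P" "e > 0"
  obtains b where "b > y" "\<And>z. y < z \<Longrightarrow> z < b \<Longrightarrow> \<bar>P z - P y\<bar> < e"
proof -
  have "(P \<longlongrightarrow> P y) (at_right y)" using assms(1) by (simp add: continuous_within)
  then have "eventually (\<lambda>z. dist (P z) (P y) < e) (at_right y)"
    using assms(2) by (rule tendstoD)
  then show ?thesis using that unfolding eventually_at_right_field dist_real_def by blast
qed

theorem proposition1:
  fixes w w1 w2 w3 :: "real \<Rightarrow> real" and theta lam pstar :: real
  assumes theta_pos: "theta > 0" and lambda_pos: "lam > 0"
    and w_range: "\<forall>p\<in>{0..1}. w p \<in> {0..1}"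
    and w_mono: "strict_mono_on {0..1} w"
    and w0: "w 0 = 0" and w1_val: "w 1 = 1"
    and d1: "\<forall>x\<in>{0..1}. (w has_real_derivative w1 x) (at x within {0..1})"
    and d2: "\<forall>x\<in>{0..1}. (w1 has_real_derivative w2 x) (at x within {0..1})"
    and d3: "\<forall>x\<in>{0..1}. (w2 has_real_derivative w3 x) (at x within {0..1})"
    and w1_0: "w1 0 > 1" and w1_1: "w1 1 > 1"
    and w3_pos: "\<forall>x\<in>{0..1}. w3 x > 0"
    and pstar: "0 < pstar" "pstar < 1" "mu_star w * w pstar = pstar"
    and pstar_unique: "\<forall>p\<in>{0<..<1}. mu_star w * w p = p \<longrightarrow> p = pstar"
  shows
    "(\<forall>P. admissible P \<and> ennreal lam * int0 (\<lambda>y. w (P y)) \<le> ennreal theta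
          \<longrightarrow> int0 P \<le> ennreal (mu_star w * theta / lam))
     \<and> (let Pst = (\<lambda>y. if y < mu_star w * theta / (pstar * lam) then pstar else 0) in
          admissible Pst
          \<and> ennreal lam * int0 (\<lambda>y. w (Pst y)) \<le> ennreal theta
          \<and> int0 Pst = ennreal (mu_star w * theta / lam)
          \<and> (\<forall>P. admissible P \<and> ennreal lam * int0 (\<lambda>y. w (P y)) \<le> ennreal theta
                 \<and> int0 P = ennreal (mu_star w * theta / lam)
                 \<longrightarrow> (\<forall>y\<ge>0. P y = Pst y)))"
proof -
  define M where "M = mu_star w"
  note mf = mu_facts[OF w_mono w0 w1_val d1 w1_0 w1_1]
  have A: "\<And>p. 0 \<le> p \<Longrightarrow> p \<le> 1 \<Longrightarrow> p \<le> M * w p"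
  proof -
    fix p :: real assume p: "0 \<le> p" "p \<le> 1"
    show "p \<le> M * w p"
    proof (cases "p = 0")
      case True then show ?thesis using w0 by simp
    next
      case False then show ?thesis using mf(1) p unfolding M_def by auto
    qed
  qed
  have M1: "M > 1" using mf(2) unfolding M_def .
  have wmono: "\<And>p q. 0 \<le> p \<Longrightarrow> p \<le> q \<Longrightarrow> q \<le> 1 \<Longrightarrow> w p \<le> w q"
  proof -
    fix p q :: real assume pq: "0 \<le> p" "p \<le> q" "q \<le> 1"
    show "w p \<le> w q"
    proof (cases "p = q")
      case False
      have "w p < w q" by (rule strict_mono_onD[OF w_mono]) (use pq False in auto)
      then show ?thesis by simp
    qed simp
  qed
  have wnn: "\<And>p. 0 \<le> p \<Longrightarrow> p \<le> 1 \<Longrightarrow> 0 \<le> w p" using w_range by auto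
  have sol: "\<And>p. 0 \<le> p \<Longrightarrow> p \<le> 1 \<Longrightarrow> M * w p = p \<Longrightarrow> p = 0 \<or> p = pstar"
  proof -
    fix p :: real assume p: "0 \<le> p" "p \<le> 1" "M * w p = p"
    have "p \<noteq> 1" using p M1 w1_val by auto
    then show "p = 0 \<or> p = pstar" using pstar_unique p unfolding M_def by force
  qed
  define c where "c = M * theta / (pstar * lam)"
  have cpos: "c > 0" using M1 theta_pos lambda_pos pstar unfolding c_def by simp
  have Mc: "M * theta / lam = pstar * c" using pstar lambda_pos unfolding c_def by simp
  have adm_range: "\<And>P y. admissible P \<Longrightarrow> 0 \<le> y \<Longrightarrow> 0 \<le> P y \<and> P y \<le> 1"
    unfolding admissible_def by blast
  have adm_dec: "\<And>P x y. admissible P \<Longrightarrow> 0 \<le> x \<Longrightarrow> x \<le> y \<Longrightarrow> P y \<le> P x"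
    unfolding admissible_def by blast
  have adm_rc: "\<And>P y. admissible P \<Longrightarrow> 0 \<le> y \<Longrightarrow> continuous (at_right y) P"
    unfolding admissible_def by blast
  have wP_dec: "\<forall>x y. 0 \<le> x \<longrightarrow> x \<le> y \<longrightarrow> w (P y) \<le> w (P x)" if "admissible P" for P
    using adm_range[OF that] adm_dec[OF that] wmono by (meson order_trans)
  have P_dec: "\<forall>x y. 0 \<le> x \<longrightarrow> x \<le> y \<longrightarrow> P y \<le> P x" if "admissible P" for P
    using adm_dec[OF that] by blast
  have key: "int0 P + (\<integral>\<^sup>+ y. ennreal (M * w (P y) - P y) * indicator {0..} y \<partial>lborel)
        = ennreal M * int0 (\<lambda>y. w (P y))" if adm: "admissible P" for P
  proof -
    have m1: "(\<lambda>y. ennreal (P y) * indicator {0..} y) \<in> borel_measurable lborel"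
      by (rule meas_enn[OF P_dec[OF adm]])
    have m2: "(\<lambda>y. ennreal (w (P y)) * indicator {0..} y) \<in> borel_measurable lborel"
      by (rule meas_enn[OF wP_dec[OF adm]])
    have m3: "(\<lambda>y. ennreal (M * (w (P y) * indicator {0..} y) - P y * indicator {0..} y)) \<in> borel_measurable lborel"
      using meas_real[OF P_dec[OF adm]] meas_real[OF wP_dec[OF adm]] by measurable
    have e3: "(\<lambda>y. ennreal (M * (w (P y) * indicator {0..} y) - P y * indicator {0..} y))
        = (\<lambda>y. ennreal (M * w (P y) - P y) * indicator {0..} y)"
      by (auto simp: indicator_def)
    have "int0 P + (\<integral>\<^sup>+ y. ennreal (M * w (P y) - P y) * indicator {0..} y \<partial>lborel)
        = (\<integral>\<^sup>+ y. ennreal (P y) * indicator {0..} y + ennreal (M * w (P y) - P y) * indicator {0..} y \<partial>lborel)"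
      unfolding int0_alt using m1 m3 e3 by (subst nn_integral_add) auto
    also have "\<dots> = (\<integral>\<^sup>+ y. ennreal M * (ennreal (w (P y)) * indicator {0..} y) \<partial>lborel)"
    proof (rule nn_integral_cong)
      fix y :: real
      show "ennreal (P y) * indicator {0..} y + ennreal (M * w (P y) - P y) * indicator {0..} y
          = ennreal M * (ennreal (w (P y)) * indicator {0..} y)"
      proof (cases "y \<ge> 0")
        case True
        have r: "0 \<le> P y" "P y \<le> 1" using adm_range[OF adm True] by auto
        have "P y \<le> M * w (P y)" using A r by auto
        then have "ennreal (P y) + ennreal (M * w (P y) - P y) = ennreal (M * w (P y))"
          using r by (subst ennreal_plus[symmetric]) auto
        moreover have "ennreal (M * w (P y)) = ennreal M * ennreal (w (P y))"
          using M1 wnn r by (simp add: ennreal_mult)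
        ultimately show ?thesis using True by simp
      qed simp
    qed
    also have "\<dots> = ennreal M * int0 (\<lambda>y. w (P y))"
      unfolding int0_alt using m2 by (rule nn_integral_cmult)
    finally show ?thesis .
  qed
  have intw: "int0 (\<lambda>y. w (P y)) \<le> ennreal (theta / lam)"
    if "ennreal lam * int0 (\<lambda>y. w (P y)) \<le> ennreal theta" for P
  proof -
    have "int0 (\<lambda>y. w (P y)) = ennreal (1/lam) * (ennreal lam * int0 (\<lambda>y. w (P y)))"
      using lambda_pos by (simp add: mult.assoc[symmetric] ennreal_mult[symmetric])
    also have "\<dots> \<le> ennreal (1/lam) * ennreal theta"
      using that by (rule mult_left_mono) simp
    also have "\<dots> = ennreal (1/lam * theta)"
      using lambda_pos theta_pos by (subst ennreal_mult) auto
    also have "\<dots> = ennreal (theta / lam)" by simp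
    finally show ?thesis .
  qed
  have bound: "int0 P + (\<integral>\<^sup>+ y. ennreal (M * w (P y) - P y) * indicator {0..} y \<partial>lborel)
      \<le> ennreal (M * theta / lam)"
    if adm: "admissible P" and c: "ennreal lam * int0 (\<lambda>y. w (P y)) \<le> ennreal theta" for P
  proof -
    have "ennreal M * int0 (\<lambda>y. w (P y)) \<le> ennreal M * ennreal (theta / lam)"
      using intw[OF c] by (rule mult_left_mono) simp
    also have "\<dots> = ennreal (M * (theta / lam))"
      using M1 lambda_pos theta_pos by (subst ennreal_mult) auto
    also have "\<dots> = ennreal (M * theta / lam)" by simp
    finally show ?thesis using key[OF adm] by simp
  qed
  have part1: "\<forall>P. admissible P \<and> ennreal lam * int0 (\<lambda>y. w (P y)) \<le> ennreal theta
          \<longrightarrow> int0 P \<le> ennreal (mu_star w * theta / lam)"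
  proof (intro allI impI)
    fix P assume h: "admissible P \<and> ennreal lam * int0 (\<lambda>y. w (P y)) \<le> ennreal theta"
    have "int0 P \<le> int0 P + (\<integral>\<^sup>+ y. ennreal (M * w (P y) - P y) * indicator {0..} y \<partial>lborel)"
      by simp
    also have "\<dots> \<le> ennreal (M * theta / lam)" using bound h by blast
    finally show "int0 P \<le> ennreal (mu_star w * theta / lam)" unfolding M_def .
  qed

  define Pst where "Pst = (\<lambda>y::real. if y < c then pstar else 0)"
  have Pst_eq: "(\<lambda>y. if y < mu_star w * theta / (pstar * lam) then pstar else 0) = Pst"
    unfolding Pst_def c_def M_def ..
  have adm_Pst: "admissible Pst"
    unfolding admissible_def
  proof (intro conjI allI impI)
    fix y :: real assume "0 \<le> y"
    show "0 \<le> Pst y" "Pst y \<le> 1" using pstar by (auto simp: Pst_def)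
  next
    fix x y :: real assume "0 \<le> x" "x \<le> y"
    then show "Pst y \<le> Pst x" using pstar by (auto simp: Pst_def)
  next
    fix y :: real assume "0 \<le> y"
    show "continuous (at_right y) Pst"
      unfolding continuous_within
    proof (rule tendsto_eventually)
      show "eventually (\<lambda>z. Pst z = Pst y) (at_right y)"
      proof (cases "y < c")
        case True
        then show ?thesis unfolding eventually_at_right_field
          by (intro exI[of _ c]) (auto simp: Pst_def)
      next
        case False
        then show ?thesis unfolding eventually_at_right_field
          by (intro exI[of _ "y+1"]) (auto simp: Pst_def)
      qed
    qed
  qed
  have int_Pst: "int0 Pst = ennreal (pstar * c)"
  proof -
    have "int0 Pst = (\<integral>\<^sup>+ y. ennreal pstar * indicator {0..<c} y \<partial>lborel)"
      unfolding int0_alt by (rule nn_integral_cong) (auto simp: Pst_def indicator_def)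
    also have "\<dots> = ennreal (pstar * c)" using pstar cpos by (intro int0_step) auto
    finally show ?thesis .
  qed
  have int_wPst: "int0 (\<lambda>y. w (Pst y)) = ennreal (w pstar * c)"
  proof -
    have "int0 (\<lambda>y. w (Pst y)) = (\<integral>\<^sup>+ y. ennreal (w pstar) * indicator {0..<c} y \<partial>lborel)"
      unfolding int0_alt by (rule nn_integral_cong) (auto simp: Pst_def indicator_def w0)
    also have "\<dots> = ennreal (w pstar * c)" using pstar cpos wnn[of pstar] by (intro int0_step) auto
    finally show ?thesis .
  qed
  have c_Pst: "ennreal lam * int0 (\<lambda>y. w (Pst y)) \<le> ennreal theta"
  proof -
    have "lam * (w pstar * c) = theta"
      using pstar lambda_pos unfolding c_def M_def by (simp add: field_simps)
    then have "ennreal lam * ennreal (w pstar * c) = ennreal theta"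
      using lambda_pos wnn[of pstar] pstar cpos by (subst ennreal_mult[symmetric]) auto
    then show ?thesis using int_wPst by simp
  qed
  have uniq: "\<forall>y\<ge>0. P y = Pst y"
    if adm: "admissible P" and cP: "ennreal lam * int0 (\<lambda>y. w (P y)) \<le> ennreal theta"
      and eqP: "int0 P = ennreal (M * theta / lam)" for P
  proof -
    let ?h = "\<lambda>y. ennreal (M * w (P y) - P y) * indicator {0..} y"
    have "int0 P + integral\<^sup>N lborel ?h \<le> int0 P + 0"
      using bound[OF adm cP] eqP by simp
    then have "integral\<^sup>N lborel ?h \<le> 0"
      using eqP by (simp only: ennreal_add_left_cancel_le) simp
    then have h0: "integral\<^sup>N lborel ?h = 0" by simp
    have m3: "(\<lambda>y. ennreal (M * (w (P y) * indicator {0..} y) - P y * indicator {0..} y)) \<in> borel_measurable lborel"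
      using meas_real[OF P_dec[OF adm]] meas_real[OF wP_dec[OF adm]] by measurable
    have e3: "(\<lambda>y. ennreal (M * (w (P y) * indicator {0..} y) - P y * indicator {0..} y)) = ?h"
      by (auto simp: indicator_def)
    have "AE y in lborel. ?h y = 0"
      using h0 m3 e3 by (subst nn_integral_0_iff_AE[symmetric]) auto
    then have AEs: "AE y in lborel. 0 \<le> y \<longrightarrow> P y = 0 \<or> P y = pstar"
    proof (rule AE_mp, intro AE_I2 impI)
      fix y :: real assume hy: "?h y = 0" "0 \<le> y"
      have r: "0 \<le> P y" "P y \<le> 1" using adm_range[OF adm hy(2)] by auto
      have "ennreal (M * w (P y) - P y) = 0" using hy by (simp add: indicator_def)
      then have "M * w (P y) - P y \<le> 0" using ennreal_eq_0_iff by blast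
      then have "M * w (P y) = P y" using A[OF r] by simp
      then show "P y = 0 \<or> P y = pstar" using sol r by blast
    qed
    have V: "P y = 0 \<or> P y = pstar" if y: "0 \<le> y" for y
    proof (rule ccontr)
      assume nv: "\<not> (P y = 0 \<or> P y = pstar)"
      define e where "e = min \<bar>P y\<bar> \<bar>P y - pstar\<bar>"
      have e: "e > 0" using nv by (auto simp: e_def)
      obtain b where b: "b > y" "\<And>z. y < z \<Longrightarrow> z < b \<Longrightarrow> \<bar>P z - P y\<bar> < e"
        using right_cont_near[OF adm_rc[OF adm y] e] by blast
      obtain z where z: "z \<in> {y<..<b}" "0 \<le> z \<longrightarrow> P z = 0 \<or> P z = pstar"
        using AE_interval[OF AEs b(1)] by blast
      have "\<bar>P z - P y\<bar> < e" using b(2) z(1) by auto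
      then show False using z y unfolding e_def by auto
    qed
    show ?thesis
    proof (intro allI impI)
      fix y :: real assume y: "0 \<le> y"
      show "P y = Pst y"
      proof (cases "y < c")
        case True
        show ?thesis
        proof (rule ccontr)
          assume "P y \<noteq> Pst y"
          then have Py: "P y = 0" using V[OF y] True by (auto simp: Pst_def)
          have "int0 P \<le> (\<integral>\<^sup>+ z. ennreal pstar * indicator {0..<y} z \<partial>lborel)"
            unfolding int0_alt
          proof (rule nn_integral_mono)
            fix z :: real
            show "ennreal (P z) * indicator {0..} z \<le> ennreal pstar * indicator {0..<y} z"
            proof (cases "0 \<le> z")
              case z: True
              show ?thesis
              proof (cases "z < y")
                case True
                then show ?thesis using V[OF z] z pstar by (auto simp: indicator_def)
              next
                case False
                then have "P z \<le> 0" using adm_dec[OF adm y, of z] Py by auto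
                then have "ennreal (P z) = 0" by (simp add: ennreal_eq_0_iff)
                then show ?thesis using z False by (auto simp: indicator_def)
              qed
            qed (simp add: indicator_def)
          qed
          also have "\<dots> = ennreal (pstar * y)" using pstar y by (intro int0_step) auto
          also have "\<dots> < ennreal (pstar * c)"
            using pstar True y cpos by (subst ennreal_less_iff) auto
          finally show False using eqP Mc by simp
        qed
      next
        case False
        show ?thesis
        proof (rule ccontr)
          assume "P y \<noteq> Pst y"
          then have Py: "P y = pstar" using V[OF y] False by (auto simp: Pst_def)
          obtain b where b: "b > y" "\<And>z. y < z \<Longrightarrow> z < b \<Longrightarrow> \<bar>P z - P y\<bar> < pstar"
            using right_cont_near[OF adm_rc[OF adm y] pstar(1)] by blast
          define d where "d = (y + b) / 2"
          have d: "y < d" "d < b" using b by (auto simp: d_def)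
          have Pd: "P d = pstar"
          proof -
            have "\<bar>P d - pstar\<bar> < pstar" using b(2)[OF d] Py by simp
            then show ?thesis using V[of d] d y by auto
          qed
          have "(\<integral>\<^sup>+ z. ennreal pstar * indicator {0..<d} z \<partial>lborel) \<le> int0 P"
            unfolding int0_alt
          proof (rule nn_integral_mono)
            fix z :: real
            show "ennreal pstar * indicator {0..<d} z \<le> ennreal (P z) * indicator {0..} z"
            proof (cases "0 \<le> z \<and> z < d")
              case True
              then have "pstar \<le> P z" using adm_dec[OF adm, of z d] Pd by auto
              then have "ennreal pstar \<le> ennreal (P z)" by (rule ennreal_leI)
              then show ?thesis using True by (auto simp: indicator_def)
            qed (auto simp: indicator_def)
          qed
          moreover have "(\<integral>\<^sup>+ z. ennreal pstar * indicator {0..<d} z \<partial>lborel) = ennreal (pstar * d)"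
            using pstar y d by (intro int0_step) auto
          moreover have "ennreal (pstar * c) < ennreal (pstar * d)"
            using pstar False d cpos by (subst ennreal_less_iff) auto
          ultimately show False using eqP Mc by simp
        qed
      qed
    qed
  qed
  have r1: "int0 Pst = ennreal (M * theta / lam)" using int_Pst Mc by simp
  have r2: "\<forall>P. admissible P \<and> ennreal lam * int0 (\<lambda>y. w (P y)) \<le> ennreal theta
                 \<and> int0 P = ennreal (M * theta / lam) \<longrightarrow> (\<forall>y\<ge>0. P y = Pst y)"
    using uniq by blast
  show ?thesis
    unfolding Let_def Pst_eq
    using part1 adm_Pst c_Pst r1 r2 unfolding M_def by blast
qed

end
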